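(* Let $\mathcal X$ be the standard Borel space of countable irreflexive graphs with vertex set $\omega$ having no isolated vertices, and $\mathcal Y$ the standard Borel space of countable pointed reflexive graphs. There is a Borel map $F\colon\mathcal X\to\mathcal Y$ such that for all $\Gamma,\Delta\in\mathcal X$: $$\Gamma\preccurlyeq_1\Delta \iff F(\Gamma)\twoheadleftarrow F(\Delta).$$ Explicitly one may take, for $\Gamma=(V,R_\Gamma)$, $F(\Gamma)$ to be the graph on $V\cup\{c\}$ ($c$ a new vertex, the distinguished vertex) with edge set $(V^2\setminus R_\Gamma)\cup(\{c\}\times V)\cup(V\times\{c\})\cup\{(c,c)\}$. Consequently (using that $\preccurlyeq_1$ on $\mathcal X$ is a complete analytic quasi-order), the relation $\twoheadleftarrow$ on countable pointed reflexive graphs is a complete analytic quasi-order.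
   Context: A graph is $(V,R)$ with $R\subseteq V^2$ symmetric and irreflexive; a reflexive graph is $(V,R)$ with $R$ symmetric and $(a,a)\in R$ for all $a\in V$. A homomorphism $f\colon(V_\Gamma,R_\Gamma)\to(V_\Delta,R_\Delta)$ is a map $V_\Gamma\to V_\Delta$ with $(a,b)\in R_\Gamma\Rightarrow (f(a),f(b))\in R_\Delta$. For graphs, $\Gamma\preccurlyeq_1\Delta$ means there is an injective homomorphism from $\Gamma$ to $\Delta$. A pointed reflexive graph $\Gamma_c$ is a (possibly empty) reflexive graph $\Gamma$ together with an extra distinguished vertex $c$ (named by a constant) adjacent to every vertex, including itself. A homomorphism of pointed reflexive graphs is a homomorphism of reflexive graphs sending distinguished vertex to distinguished vertex. For pointed reflexive graphs, $\Gamma_c\twoheadleftarrow\Delta_c$ means there is a surjective homomorphism (of pointed reflexive graphs) from $\Delta_c$ onto $\Gamma_c$. A complete analytic quasi-order on a standard Borel space $Y$ is an analytic quasi-order $Q$ such that every analytic quasi-order $P$ on a standard Borel space $X$ Borel reduces to it: there is a Borel $f\colon X\to Y$ with $xPx'\iff f(x)Qf(x')$. *)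

theory Defs
  imports "HOL-Analysis.Analysis"
begin

text \<open>Countable structures are coded by binary relations on the vertex set \<open>nat\<close> (= omega),
  i.e. points of the compact space \<open>nat \<Rightarrow> nat \<Rightarrow> bool\<close> with the product topology
  (bool carries the discrete topology); this is the usual coding of the standard Borel
  spaces of countable structures.\<close>

type_synonym code = "nat \<Rightarrow> nat \<Rightarrow> bool"

definition graphs_X :: "code set" where
  "graphs_X = {R. (\<forall>a b. R a b \<longrightarrow> R b a) \<and> (\<forall>a. \<not> R a a) \<and> (\<forall>a. \<exists>b. R a b)}"

text \<open>The space Y: countable pointed reflexive graphs, coded on vertex set omega with
  distinguished vertex (the constant c) equal to 0; c is adjacent to every vertex.\<close>
definition graphs_Y :: "code set" where
  "graphs_Y = {S. (\<forall>a b. S a b \<longrightarrow> S b a) \<and> (\<forall>a. S a a) \<and> (\<forall>a. S 0 a)}"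

definition inj_hom_le :: "code \<Rightarrow> code \<Rightarrow> bool" where
  "inj_hom_le R R' \<longleftrightarrow> (\<exists>f::nat \<Rightarrow> nat. inj f \<and> (\<forall>a b. R a b \<longrightarrow> R' (f a) (f b)))"

text \<open>\<open>surj_hom_onto S S'\<close>: there is a surjective homomorphism of pointed reflexive graphs
  from S' onto S (written S \<twoheadleftarrow> S' in the paper).\<close>
definition surj_hom_onto :: "code \<Rightarrow> code \<Rightarrow> bool" where
  "surj_hom_onto S S' \<longleftrightarrow>
     (\<exists>h::nat \<Rightarrow> nat. surj h \<and> h 0 = 0 \<and> (\<forall>a b. S' a b \<longrightarrow> S (h a) (h b)))"

text \<open>The explicit map F: vertex v of Gamma becomes vertex v+1, the new vertex c is 0;
  edges among old vertices are the non-edges of Gamma, and c is adjacent to everything.\<close>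
definition F_map :: "code \<Rightarrow> code" where
  "F_map R = (\<lambda>i j. i = 0 \<or> j = 0 \<or> \<not> R (i - 1) (j - 1))"

definition analytic_set :: "'a::topological_space set \<Rightarrow> bool" where
  "analytic_set A \<longleftrightarrow> A = {} \<or> (\<exists>g::(nat \<Rightarrow> nat) \<Rightarrow> 'a. continuous_on UNIV g \<and> range g = A)"

definition analytic_qo_on :: "'a::topological_space set \<Rightarrow> ('a \<Rightarrow> 'a \<Rightarrow> bool) \<Rightarrow> bool" where
  "analytic_qo_on A Q \<longleftrightarrow>
     (\<forall>x\<in>A. Q x x) \<and> (\<forall>x\<in>A. \<forall>y\<in>A. \<forall>z\<in>A. Q x y \<longrightarrow> Q y z \<longrightarrow> Q x z)
     \<and> analytic_set {(x, y). x \<in> A \<and> y \<in> A \<and> Q x y}"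

definition borel_reduces :: "('x::topological_space \<Rightarrow> 'x \<Rightarrow> bool) \<Rightarrow> 'a::topological_space set
     \<Rightarrow> ('a \<Rightarrow> 'a \<Rightarrow> bool) \<Rightarrow> bool" where
  "borel_reduces P A Q \<longleftrightarrow>
     (\<exists>f. f \<in> borel_measurable borel \<and> (\<forall>x. f x \<in> A) \<and> (\<forall>x x'. P x x' \<longleftrightarrow> Q (f x) (f x')))"

text \<open>Q is complete for analytic quasi-orders on Polish spaces of type 'x (the theorem quantifies
  over all Polish types 'x; every standard Borel space is Borel-isomorphic to a Polish one).\<close>
definition complete_wrt :: "'x::polish_space itself \<Rightarrow> 'a::topological_space set
     \<Rightarrow> ('a \<Rightarrow> 'a \<Rightarrow> bool) \<Rightarrow> bool" where
  "complete_wrt _ A Q \<longleftrightarrow> analytic_qo_on A Q \<and>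
     (\<forall>P::'x \<Rightarrow> 'x \<Rightarrow> bool. analytic_qo_on UNIV P \<longrightarrow> borel_reduces P A Q)"

end

theory Submission imports Defs "HOL-Library.Nat_Bijection" begin

lemma locconst_cont:
  fixes f :: "(nat \<Rightarrow> nat) \<Rightarrow> 'b::topological_space"
  assumes "\<And>x. \<exists>K. \<forall>y. (\<forall>j\<le>K. y j = x j) \<longrightarrow> f y = f x"
  shows "continuous_on UNIV f"
proof -
  have "(f \<longlongrightarrow> f x) (at x within UNIV)" for x :: "nat \<Rightarrow> nat"
  proof -
    obtain K where K: "\<forall>y. (\<forall>j\<le>K. y j = x j) \<longrightarrow> f y = f x" using assms by blast
    let ?U = "\<Inter>j\<in>{..K}. (\<lambda>y. y j) -` {x j}"
    have "open ?U"
    proof (rule open_INT)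
      show "finite {..K}" by simp
      have "open ((\<lambda>y::nat\<Rightarrow>nat. y j) -` {x j})" for j
      proof -
        have "continuous_on UNIV (\<lambda>y::nat\<Rightarrow>nat. y j)" by (rule continuous_on_product_coordinates)
        moreover have "open {x j}" by (rule open_discrete)
        ultimately show ?thesis by (rule open_vimage[rotated])
      qed
      thus "\<forall>j\<in>{..K}. open ((\<lambda>y::nat\<Rightarrow>nat. y j) -` {x j})" by blast
    qed
    moreover have "x \<in> ?U" by simp
    moreover have "\<forall>y\<in>?U. f y = f x"
    proof
      fix y assume "y \<in> ?U"
      hence "\<forall>j\<le>K. y j = x j" by blast
      thus "f y = f x" using K by blast
    qed
    ultimately have "eventually (\<lambda>y. f y = f x) (nhds x)"
      unfolding eventually_nhds by blast
    hence "eventually (\<lambda>y. f y = f x) (at x within UNIV)"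
      unfolding eventually_at_filter by (rule eventually_mono) simp
    thus ?thesis by (rule tendsto_eventually)
  qed
  thus ?thesis by (simp add: continuous_on_def)
qed

lemma F_cont: "continuous_on UNIV F_map"
  unfolding F_map_def
proof (intro continuous_on_coordinatewise_then_product)
  fix i j
  have "continuous_on UNIV ((\<lambda>b. i = 0 \<or> j = 0 \<or> \<not> b) \<circ> (\<lambda>R::code. R (i - 1) (j - 1)))"
    apply (rule continuous_on_compose)
     apply (rule continuous_on_product_then_coordinatewise) apply simp
    by (simp add: continuous_on_discrete)
  thus "continuous_on UNIV (\<lambda>R::code. i = 0 \<or> j = 0 \<or> \<not> R (i - 1) (j - 1))" by (simp add: o_def)
qed


definition Sraw :: "(nat \<Rightarrow> nat) \<Rightarrow> code" where
  "Sraw w i j = (w (4 * prod_encode (i, j)) \<noteq> 0)"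
definition Traw :: "(nat \<Rightarrow> nat) \<Rightarrow> code" where
  "Traw w i j = (w (4 * prod_encode (i, j) + 1) \<noteq> 0)"
definition hr :: "(nat \<Rightarrow> nat) \<Rightarrow> nat \<Rightarrow> nat" where "hr w n = w (4 * n + 2)"
definition gr :: "(nat \<Rightarrow> nat) \<Rightarrow> nat \<Rightarrow> nat" where "gr w n = w (4 * n + 3)"
definition PS :: "(nat \<Rightarrow> nat) \<Rightarrow> code" where
  "PS w i j = (i = j \<or> i = 0 \<or> j = 0 \<or> Sraw w i j \<or> Sraw w j i)"
definition bad :: "(nat \<Rightarrow> nat) \<Rightarrow> nat \<Rightarrow> bool" where
  "bad w n = (hr w 0 \<noteq> 0 \<or> (\<exists>y\<le>n. gr w y \<le> n \<and> hr w (gr w y) \<noteq> y))"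
definition hh :: "(nat \<Rightarrow> nat) \<Rightarrow> nat \<Rightarrow> nat" where
  "hh w m = (if m = 0 then 0 else if bad w (m - 1) then fst (prod_decode m) else hr w m)"
definition PT :: "(nat \<Rightarrow> nat) \<Rightarrow> code" where
  "PT w a b = (a = b \<or> a = 0 \<or> b = 0 \<or> ((Traw w a b \<or> Traw w b a) \<and> PS w (hh w a) (hh w b)))"
definition Phi :: "(nat \<Rightarrow> nat) \<Rightarrow> code \<times> code" where "Phi w = (PS w, PT w)"

lemma bad_mono: "bad w n \<Longrightarrow> n \<le> n' \<Longrightarrow> bad w n'"
  unfolding bad_def by (meson order_trans)

lemma PS_Y: "PS w \<in> graphs_Y" unfolding graphs_Y_def PS_def by auto
lemma PT_Y: "PT w \<in> graphs_Y" unfolding graphs_Y_def PT_def PS_def by auto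

lemma hh_surj: "surj (hh w)"
proof (cases "\<exists>N. bad w N")
  case True
  then obtain N where N: "bad w N" by blast
  show ?thesis
  proof (rule surjI)
    fix y
    define m where "m = prod_encode (y, Suc N)"
    have "Suc N \<le> m" unfolding m_def by (rule le_prod_encode_2)
    hence b: "bad w (m - 1)" and m0: "m \<noteq> 0" using bad_mono[OF N, of "m - 1"] by auto
    have "fst (prod_decode m) = y" unfolding m_def by (simp only: prod_encode_inverse fst_conv)
    thus "hh w m = y" unfolding hh_def using b m0 by simp
  qed
next
  case False
  hence nb: "\<And>n. \<not> bad w n" by blast
  have h0: "hr w 0 = 0" using nb[of 0] unfolding bad_def by blast
  have hg: "hr w (gr w y) = y" for y
  proof -
    have "\<not> (y \<le> max y (gr w y) \<and> gr w y \<le> max y (gr w y) \<and> hr w (gr w y) \<noteq> y)"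
      using nb[of "max y (gr w y)"] unfolding bad_def by blast
    thus ?thesis by simp
  qed
  show ?thesis
  proof (rule surjI)
    fix y
    show "hh w (gr w y) = y"
    proof (cases "gr w y = 0")
      case True thus ?thesis using hg[of y] h0 by (simp add: hh_def)
    next
      case False thus ?thesis using hg[of y] nb[of "gr w y - 1"] by (simp add: hh_def)
    qed
  qed
qed

lemma hh0: "hh w 0 = 0" by (simp add: hh_def)

lemma hh_hom: "PT w a b \<Longrightarrow> PS w (hh w a) (hh w b)"
  unfolding PT_def by (auto simp: PS_def hh0)

lemma Phi_in: "Phi w \<in> {(x, y). x \<in> graphs_Y \<and> y \<in> graphs_Y \<and> surj_hom_onto x y}"
  unfolding Phi_def surj_hom_onto_def using PS_Y PT_Y hh_surj hh0 hh_hom by blast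

definition enc :: "code \<Rightarrow> code \<Rightarrow> (nat \<Rightarrow> nat) \<Rightarrow> (nat \<Rightarrow> nat) \<Rightarrow> nat \<Rightarrow> nat" where
  "enc S T h g k = (if k mod 4 = 0 then (if S (fst (prod_decode (k div 4))) (snd (prod_decode (k div 4))) then 1 else 0)
     else if k mod 4 = 1 then (if T (fst (prod_decode (k div 4))) (snd (prod_decode (k div 4))) then 1 else 0)
     else if k mod 4 = 2 then h (k div 4) else g (k div 4))"

lemma enc_simps: "Sraw (enc S T h g) i j = S i j" "Traw (enc S T h g) i j = T i j"
   "hr (enc S T h g) n = h n" "gr (enc S T h g) n = g n"
proof -
  have a: "(4 * k) mod 4 = (0::nat)" "(4 * k) div 4 = k" for k :: nat by simp_all
  have b: "(4 * k + 1) mod 4 = (1::nat)" "(4 * k + 1) div 4 = k" for k :: nat by presburger+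
  have c: "(4 * k + 2) mod 4 = (2::nat)" "(4 * k + 2) div 4 = k" for k :: nat by presburger+
  have d: "(4 * k + 3) mod 4 = (3::nat)" "(4 * k + 3) div 4 = k" for k :: nat by presburger+
  show "Sraw (enc S T h g) i j = S i j" unfolding Sraw_def enc_def a by simp
  show "Traw (enc S T h g) i j = T i j" unfolding Traw_def enc_def b by simp
  show "hr (enc S T h g) n = h n" unfolding hr_def enc_def c by simp
  show "gr (enc S T h g) n = g n" unfolding gr_def enc_def d by simp
qed

lemma Phi_onto:
  assumes "S \<in> graphs_Y" "T \<in> graphs_Y" "surj_hom_onto S T"
  shows "(S, T) \<in> range Phi"
proof -
  obtain h where h: "surj h" "h 0 = 0" "\<forall>a b. T a b \<longrightarrow> S (h a) (h b)"
    using assms(3) unfolding surj_hom_onto_def by blast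
  define w where "w = enc S T h (inv h)"
  have nb: "\<not> bad w n" for n
    unfolding bad_def w_def enc_simps using h(1,2) by (simp add: surj_f_inv_f)
  have hh: "hh w m = h m" for m
  proof (cases "m = 0")
    case True thus ?thesis using h(2) by (simp add: hh_def)
  next
    case False thus ?thesis using nb[of "m - 1"] by (simp add: hh_def w_def enc_simps)
  qed
  have sS: "S a b \<Longrightarrow> S b a" and rS: "S a a" and zS: "S 0 a" for a b
    using assms(1) unfolding graphs_Y_def by blast+
  have sT: "T a b \<Longrightarrow> T b a" and rT: "T a a" and zT: "T 0 a" for a b
    using assms(2) unfolding graphs_Y_def by blast+
  have 1: "PS w = S"
  proof (intro ext)
    fix i j
    have "PS w i j = (i = j \<or> i = 0 \<or> j = 0 \<or> S i j \<or> S j i)" by (simp add: PS_def w_def enc_simps)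
    also have "\<dots> = S i j"
    proof
      assume "i = j \<or> i = 0 \<or> j = 0 \<or> S i j \<or> S j i"
      thus "S i j"
      proof (elim disjE)
        assume "j = 0" thus "S i j" using sS[OF zS[of i]] by simp
      qed (use rS zS sS in simp_all)
    qed simp
    finally show "PS w i j = S i j" .
  qed
  have 2: "PT w = T"
  proof (intro ext)
    fix i j
    have "PT w i j = (i = j \<or> i = 0 \<or> j = 0 \<or> ((T i j \<or> T j i) \<and> S (h i) (h j)))"
      unfolding PT_def hh 1 by (simp add: w_def enc_simps)
    also have "\<dots> = T i j"
    proof
      assume "i = j \<or> i = 0 \<or> j = 0 \<or> ((T i j \<or> T j i) \<and> S (h i) (h j))"
      thus "T i j"
      proof (elim disjE conjE)
        assume "j = 0" thus "T i j" using sT[OF zT[of i]] by simp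
      next
        assume "T j i" thus "T i j" by (rule sT)
      qed (use rT zT in simp_all)
    next
      assume "T i j" thus "i = j \<or> i = 0 \<or> j = 0 \<or> ((T i j \<or> T j i) \<and> S (h i) (h j))"
        using h(3) by simp
    qed
    finally show "PT w i j = T i j" .
  qed
  have "Phi w = (S, T)" unfolding Phi_def 1 2 by (rule refl)
  show ?thesis
  proof (rule image_eqI)
    show "(S, T) = Phi w" using \<open>Phi w = (S, T)\<close> by (rule HOL.sym)
    show "w \<in> UNIV" by (rule UNIV_I)
  qed
qed


lemma bad_agree: assumes "\<forall>k\<le>4*n+3. y k = x k" shows "bad y n = bad x n"
proof -
  have g: "gr y z = gr x z" if "z \<le> n" for z using assms that unfolding gr_def by auto
  have h: "hr y z = hr x z" if "z \<le> n" for z using assms that unfolding hr_def by auto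
  show ?thesis unfolding bad_def using g h by (metis le0)
qed

lemma hh_agree: assumes "\<forall>k\<le>4*m+3. y k = x k" shows "hh y m = hh x m"
proof (cases "m = 0")
  case False
  have "bad y (m-1) = bad x (m-1)" by (rule bad_agree) (use assms in auto)
  moreover have "hr y m = hr x m" using assms unfolding hr_def by auto
  ultimately show ?thesis unfolding hh_def by simp
qed (simp add: hh_def)

lemma PS_agree: assumes "\<forall>k\<le>4*(prod_encode(i,j)+prod_encode(j,i)). y k = x k" shows "PS y i j = PS x i j"
  using assms unfolding PS_def Sraw_def by auto

lemma Phi_cont: "continuous_on UNIV Phi"
  unfolding Phi_def
proof (intro continuous_on_Pair continuous_on_coordinatewise_then_product)
  fix i j
  show "continuous_on UNIV (\<lambda>w. PS w i j)"
  proof (rule locconst_cont)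
    fix x show "\<exists>K. \<forall>y. (\<forall>k\<le>K. y k = x k) \<longrightarrow> PS y i j = PS x i j"
      using PS_agree by blast
  qed
  show "continuous_on UNIV (\<lambda>w. PT w i j)"
  proof (rule locconst_cont)
    fix x
    let ?K = "4*(prod_encode(i,j)+prod_encode(j,i)) + 1 + 4*(i+j)+3 + 4*(prod_encode(hh x i,hh x j)+prod_encode(hh x j,hh x i))"
    show "\<exists>K. \<forall>y. (\<forall>k\<le>K. y k = x k) \<longrightarrow> PT y i j = PT x i j"
    proof (rule exI[of _ ?K], intro allI impI)
      fix y assume a: "\<forall>k\<le>?K. y k = x k"
      have ag: "\<And>K'. K' \<le> ?K \<Longrightarrow> \<forall>k\<le>K'. y k = x k" using a by (meson order_trans)
      have 1: "hh y i = hh x i" by (rule hh_agree, rule ag) (simp add: distrib_left)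
      have 2: "hh y j = hh x j" by (rule hh_agree, rule ag) (simp add: distrib_left)
      have 3: "PS y (hh x i) (hh x j) = PS x (hh x i) (hh x j)" by (rule PS_agree, rule ag) (simp add: distrib_left)
      have 4: "Traw y i j = Traw x i j" "Traw y j i = Traw x j i"
        unfolding Traw_def using ag[of "4 * prod_encode (i, j) + 1"] ag[of "4 * prod_encode (j, i) + 1"] by simp_all
      show "PT y i j = PT x i j" unfolding PT_def 1 2 3 4 ..
    qed
  qed
qed

lemma Y_analytic: "analytic_set {(x, y). x \<in> graphs_Y \<and> y \<in> graphs_Y \<and> surj_hom_onto x y}"
  unfolding analytic_set_def
proof (intro disjI2 exI conjI)
  show "continuous_on UNIV Phi" by (rule Phi_cont)
  show "range Phi = {(x, y). x \<in> graphs_Y \<and> y \<in> graphs_Y \<and> surj_hom_onto x y}"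
  proof
    show "range Phi \<subseteq> {(x, y). x \<in> graphs_Y \<and> y \<in> graphs_Y \<and> surj_hom_onto x y}"
      by (rule image_subsetI) (rule Phi_in)
    show "{(x, y). x \<in> graphs_Y \<and> y \<in> graphs_Y \<and> surj_hom_onto x y} \<subseteq> range Phi"
    proof
      fix p assume "p \<in> {(x, y). x \<in> graphs_Y \<and> y \<in> graphs_Y \<and> surj_hom_onto x y}"
      then obtain x y where "p = (x, y)" "x \<in> graphs_Y" "y \<in> graphs_Y" "surj_hom_onto x y" by blast
      thus "p \<in> range Phi" using Phi_onto by simp
    qed
  qed
qed


lemma F_Y: "R \<in> graphs_X \<Longrightarrow> F_map R \<in> graphs_Y"
  unfolding graphs_X_def graphs_Y_def F_map_def by auto

lemma equiv_dir1:
  assumes "inj_hom_le R R'" shows "surj_hom_onto (F_map R) (F_map R')"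
proof -
  obtain f where f: "inj f" "\<forall>a b. R a b \<longrightarrow> R' (f a) (f b)" using assms unfolding inj_hom_le_def by blast
  define h where "h m = (if m \<noteq> 0 \<and> m - 1 \<in> range f then inv f (m - 1) + 1 else 0)" for m
  have hf: "h (f v + 1) = v + 1" for v unfolding h_def using f(1) by simp
  show ?thesis unfolding surj_hom_onto_def
  proof (intro exI conjI allI impI)
    show "surj h"
    proof (rule surjI)
      fix y show "h (if y = 0 then 0 else f (y - 1) + 1) = y" using hf[of "y-1"] by (auto simp: h_def)
    qed
    show "h 0 = 0" by (simp add: h_def)
    fix a b assume ab: "F_map R' a b"
    show "F_map R (h a) (h b)"
    proof (cases "h a = 0 \<or> h b = 0")
      case False
      then obtain u v where u: "a \<noteq> 0" "a - 1 = f u" "h a = u + 1" and v: "b \<noteq> 0" "b - 1 = f v" "h b = v + 1"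
        unfolding h_def using f(1) by (auto split: if_splits)
      have "\<not> R' (f u) (f v)" using ab u v unfolding F_map_def by metis
      hence "\<not> R u v" using f(2) by blast
      thus ?thesis unfolding F_map_def u v by simp
    qed (auto simp: F_map_def)
  qed
qed

lemma equiv_dir2:
  assumes "surj_hom_onto (F_map R) (F_map R')" shows "inj_hom_le R R'"
proof -
  obtain h where h: "surj h" "h 0 = 0" "\<forall>a b. F_map R' a b \<longrightarrow> F_map R (h a) (h b)"
    using assms unfolding surj_hom_onto_def by blast
  define f where "f v = inv h (v + 1) - 1" for v
  have hi: "h (inv h y) = y" for y using h(1) by (simp add: surj_f_inv_f)
  have nz: "inv h (v + 1) \<noteq> 0" for v using hi[of "v+1"] h(2) by (metis add_eq_0_iff_both_eq_0 one_neq_zero)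
  have hf: "h (f v + 1) = v + 1" for v using nz[of v] hi[of "v+1"] unfolding f_def by simp
  show ?thesis unfolding inj_hom_le_def
  proof (intro exI conjI allI impI)
    show "inj f" by (rule injI) (metis hf add_right_cancel)
    fix u v assume uv: "R u v"
    show "R' (f u) (f v)"
    proof (rule ccontr)
      assume "\<not> R' (f u) (f v)"
      hence "F_map R' (f u + 1) (f v + 1)" unfolding F_map_def by simp
      hence "F_map R (u + 1) (v + 1)" using h(3) hf by metis
      thus False using uv unfolding F_map_def by simp
    qed
  qed
qed

theorem proposition3p3:
  shows "F_map \<in> borel_measurable borel \<and> F_map ` graphs_X \<subseteq> graphs_Y
    \<and> (\<forall>R\<in>graphs_X. \<forall>R'\<in>graphs_X. inj_hom_le R R' \<longleftrightarrow> surj_hom_onto (F_map R) (F_map R'))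
    \<and> (complete_wrt TYPE('x::polish_space) graphs_X inj_hom_le
         \<longrightarrow> complete_wrt TYPE('x) graphs_Y surj_hom_onto)"
proof (intro conjI impI)
  show Fm: "F_map \<in> borel_measurable borel" by (rule borel_measurable_continuous_onI[OF F_cont])
  show "F_map ` graphs_X \<subseteq> graphs_Y" using F_Y by blast
  show eqv: "\<forall>R\<in>graphs_X. \<forall>R'\<in>graphs_X. inj_hom_le R R' \<longleftrightarrow> surj_hom_onto (F_map R) (F_map R')"
    using equiv_dir1 equiv_dir2 by blast
  assume c: "complete_wrt TYPE('x::polish_space) graphs_X inj_hom_le"
  have qo: "analytic_qo_on graphs_Y surj_hom_onto"
    unfolding analytic_qo_on_def
  proof (intro conjI ballI impI)
    fix x show "surj_hom_onto x x" unfolding surj_hom_onto_def by (intro exI[of _ id]) auto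
  next
    fix x y z assume "surj_hom_onto x y" "surj_hom_onto y z"
    then obtain h1 h2 where "surj h1" "h1 0 = 0" "\<forall>a b. y a b \<longrightarrow> x (h1 a) (h1 b)"
      "surj h2" "h2 0 = 0" "\<forall>a b. z a b \<longrightarrow> y (h2 a) (h2 b)" unfolding surj_hom_onto_def by blast
    thus "surj_hom_onto x z" unfolding surj_hom_onto_def
      by (intro exI[of _ "h1 \<circ> h2"]) (auto simp: comp_surj[unfolded comp_def] intro: comp_surj)
  next
    show "analytic_set {(x, y). x \<in> graphs_Y \<and> y \<in> graphs_Y \<and> surj_hom_onto x y}" by (rule Y_analytic)
  qed
  show "complete_wrt TYPE('x) graphs_Y surj_hom_onto"
    unfolding complete_wrt_def
  proof (intro conjI qo allI impI)
    fix P :: "'x \<Rightarrow> 'x \<Rightarrow> bool" assume "analytic_qo_on UNIV P"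
    then obtain f where f: "f \<in> borel_measurable borel" "\<forall>x. f x \<in> graphs_X" "\<forall>x x'. P x x' \<longleftrightarrow> inj_hom_le (f x) (f x')"
      using c unfolding complete_wrt_def borel_reduces_def by blast
    show "borel_reduces P graphs_Y surj_hom_onto" unfolding borel_reduces_def
    proof (intro exI[of _ "F_map \<circ> f"] conjI allI)
      show "F_map \<circ> f \<in> borel_measurable borel" using measurable_comp[OF f(1) Fm] .
      fix x show "(F_map \<circ> f) x \<in> graphs_Y" using F_Y f(2) by simp
    next
      fix x x' show "P x x' = surj_hom_onto ((F_map \<circ> f) x) ((F_map \<circ> f) x')"
        using f(2,3) eqv by simp
    qed
  qed
qed

end
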